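(* Let $p(x,y)=1+xy\,(1+h(x,y))$ be an analytic germ with $h(0,0)=0$, and suppose the 3-web $(dx,dy,dy-p\,dx)$ has nonzero Blaschke curvature at the origin. Let $r=r(x)$ and $s=s(y)$ be analytic germs of one variable satisfying $$r'(x)\,p-r(x)\,\frac{\partial p}{\partial x}-\Big(s'(y)\,p^3+s(y)\,p^2\,\frac{\partial p}{\partial y}\Big)=0 .$$ If $r(0)=s(0)=0$, then $r\equiv 0$ and $s\equiv 0$. Equivalently, every nontrivial abelian relation $(\omega_1,\dots,\omega_4)$ of the 4-web $(dx,\,dy,\,dy-p\,dx,\,dy+p\,dx)$, with $\omega_1=r\,dx$ and $\omega_2=s\,dy$, satisfies $r(0)\neq0$ or $s(0)\neq0$. *)

theory Defs
  imports "HOL-Analysis.Analysis"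
begin

text \<open>Germs of complex analytic functions of two variables at the origin:
  given near (0,0) by an (absolutely, i.e. unconditionally) convergent double
  power series on a small polydisc.\<close>
definition analytic_germ2 :: "(complex \<Rightarrow> complex \<Rightarrow> complex) \<Rightarrow> bool" where
  "analytic_germ2 f \<longleftrightarrow>
     (\<exists>c :: nat \<Rightarrow> nat \<Rightarrow> complex. \<exists>\<epsilon>>0. \<forall>x y. norm x < \<epsilon> \<and> norm y < \<epsilon> \<longrightarrow>
        ((\<lambda>(i,j). c i j * x ^ i * y ^ j) has_sum f x y) UNIV)"

definition partial_x :: "(complex \<Rightarrow> complex \<Rightarrow> complex) \<Rightarrow> complex \<Rightarrow> complex \<Rightarrow> complex" where
  "partial_x f x y = deriv (\<lambda>t. f t y) x"

definition partial_y :: "(complex \<Rightarrow> complex \<Rightarrow> complex) \<Rightarrow> complex \<Rightarrow> complex \<Rightarrow> complex" where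
  "partial_y f x y = deriv (\<lambda>t. f x t) y"

text \<open>Normalising
  w1 = p dx, w2 = -dy, w3 = dy - p dx (so w1+w2+w3 = 0), the connection form
  gamma with d w_i = gamma \<and> w_i is gamma = (p_y / p) dy, and the curvature
  2-form is d gamma = d/dx (p_y/p) dx \<and> dy.  We record its coefficient.\<close>
definition blaschke_curvature_web3 ::
  "(complex \<Rightarrow> complex \<Rightarrow> complex) \<Rightarrow> complex \<Rightarrow> complex \<Rightarrow> complex" where
  "blaschke_curvature_web3 p x y =
     partial_x (\<lambda>a b. partial_y p a b / p a b) x y"

end

theory Submission
  imports Defs "HOL-Complex_Analysis.Complex_Analysis"
begin

lemma slice_sums:
  fixes c :: "nat \<Rightarrow> nat \<Rightarrow> complex" and f :: "complex \<Rightarrow> complex \<Rightarrow> complex"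
  assumes e: "0 < \<epsilon>"
    and H: "\<forall>x y. norm x < \<epsilon> \<and> norm y < \<epsilon> \<longrightarrow>
        ((\<lambda>(i,j). c i j * x ^ i * y ^ j) has_sum f x y) UNIV"
    and y: "norm y < \<epsilon>"
  shows "\<exists>b. \<forall>t. norm t < \<epsilon> \<longrightarrow> (\<lambda>i. b i * t^i) sums f t y"
proof -
  define t0 where "t0 = complex_of_real (\<epsilon>/2)"
  have nt0: "norm t0 < \<epsilon>" "t0 \<noteq> 0" using e by (auto simp: t0_def)
  have S0: "(\<lambda>(i,j). c i j * t0^i * y^j) summable_on Sigma UNIV (\<lambda>_. UNIV)"
    using H nt0 y unfolding summable_on_def by auto
  define b where "b i = infsum (\<lambda>j. c i j * y^j) UNIV" for i
  have bi: "((\<lambda>j. c i j * y^j) has_sum b i) UNIV" for i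
  proof -
    have "(\<lambda>j. c i j * t0^i * y^j) summable_on UNIV"
      using summable_on_SigmaD1[of "\<lambda>i j. c i j * t0^i * y^j" UNIV "\<lambda>_. UNIV" i] S0 by auto
    then have "(\<lambda>j. t0^i * (c i j * y^j)) summable_on UNIV"
      by (rule summable_on_cong[THEN iffD1, rotated]) (simp add: mult_ac)
    then have "(\<lambda>j. c i j * y^j) summable_on UNIV"
      using summable_on_cmult_right'[of "t0^i" "\<lambda>j. c i j * y^j" UNIV] nt0 by simp
    then show ?thesis unfolding b_def by simp
  qed
  show ?thesis
  proof (intro exI allI impI)
    fix t :: complex assume t: "norm t < \<epsilon>"
    have A: "((\<lambda>(i,j). c i j * t ^ i * y ^ j) has_sum f t y) (Sigma UNIV (\<lambda>_. UNIV))"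
      using H t y by auto
    have B: "((\<lambda>j. (\<lambda>(i,j). c i j * t ^ i * y ^ j) (i, j)) has_sum (b i * t^i)) UNIV" for i
    proof -
      have "((\<lambda>j. t^i * (c i j * y^j)) has_sum (t^i * b i)) UNIV"
        by (rule has_sum_cmult_right[OF bi])
      then have "((\<lambda>j. c i j * t^i * y^j) has_sum (b i * t^i)) UNIV"
        by (simp add: mult_ac)
      then show ?thesis by simp
    qed
    have "((\<lambda>i. b i * t^i) has_sum f t y) UNIV"
      by (rule has_sum_Sigma'[OF A B])
    then show "(\<lambda>i. b i * t^i) sums f t y" by (rule has_sum_imp_sums)
  qed
qed

lemma slice_holo:
  fixes c :: "nat \<Rightarrow> nat \<Rightarrow> complex" and f :: "complex \<Rightarrow> complex \<Rightarrow> complex"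
  assumes e: "0 < \<epsilon>"
    and H: "\<forall>x y. norm x < \<epsilon> \<and> norm y < \<epsilon> \<longrightarrow>
        ((\<lambda>(i,j). c i j * x ^ i * y ^ j) has_sum f x y) UNIV"
    and y: "norm y < \<epsilon>"
  shows "(\<lambda>t. f t y) holomorphic_on ball 0 \<epsilon>"
proof -
  obtain b where b: "\<And>t. norm t < \<epsilon> \<Longrightarrow> (\<lambda>i. b i * t^i) sums f t y"
    using slice_sums[OF e H y] by blast
  show ?thesis
    unfolding holomorphic_on_open[OF open_ball]
  proof
    fix z :: complex assume z: "z \<in> ball 0 \<epsilon>"
    have "((\<lambda>z. \<Sum>n. b n * z^n) has_field_derivative (\<Sum>n. diffs b n * z^n)) (at z)"
      by (rule termdiffs_strong') (use b sums_summable z in auto)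
    then have "((\<lambda>t. f t y) has_field_derivative (\<Sum>n. diffs b n * z^n)) (at z)"
      by (rule has_field_derivative_transform_within_open[OF _ open_ball z])
         (use b sums_unique in force)
    then show "\<exists>f'. ((\<lambda>t. f t y) has_field_derivative f') (at z)" by blast
  qed
qed

lemma slice_bound:
  fixes c :: "nat \<Rightarrow> nat \<Rightarrow> complex" and f :: "complex \<Rightarrow> complex \<Rightarrow> complex"
  assumes e: "0 < \<epsilon>"
    and H: "\<forall>x y. norm x < \<epsilon> \<and> norm y < \<epsilon> \<longrightarrow>
        ((\<lambda>(i,j). c i j * x ^ i * y ^ j) has_sum f x y) UNIV"
  shows "\<exists>\<rho>>0. \<exists>K. \<forall>x y. norm x < \<rho> \<and> norm y < \<rho> \<longrightarrow>
           ((\<lambda>t. f t y) has_field_derivative deriv (\<lambda>t. f t y) x) (at x) \<and>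
           norm (deriv (\<lambda>t. f t y) x) \<le> K"
proof -
  define R where "R = \<epsilon>/2"
  have R: "0 < R" "R < \<epsilon>" using e by (auto simp: R_def)
  define g where "g = (\<lambda>(i,j). norm (c i j) * R^i * R^j)"
  have "(\<lambda>(i,j). c i j * complex_of_real R ^ i * complex_of_real R ^ j) summable_on UNIV"
    using H[rule_format, of "complex_of_real R" "complex_of_real R"] R unfolding summable_on_def by auto
  then have "(\<lambda>p. norm ((\<lambda>(i,j). c i j * complex_of_real R ^ i * complex_of_real R ^ j) p)) summable_on UNIV"
    using summable_on_iff_abs_summable_on_complex by blast
  then have "g summable_on UNIV"
    by (rule summable_on_cong[THEN iffD1, rotated])
       (use R in \<open>auto simp: g_def norm_mult norm_power\<close>)
  then obtain M where M: "(g has_sum M) UNIV" unfolding summable_on_def by blast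
  have fb: "norm (f x y) \<le> M" if "norm x < R" "norm y < R" for x y
  proof (rule norm_infsum_le[OF _ M])
    show "((\<lambda>(i,j). c i j * x ^ i * y ^ j) has_sum f x y) UNIV"
      using H that R by auto
    fix p :: "nat \<times> nat"
    obtain i j where p: "p = (i,j)" by (cases p)
    have "norm x ^ i \<le> R ^ i" "norm y ^ j \<le> R^j"
      using that by (auto intro!: power_mono)
    then have "norm (c i j) * (norm x ^ i * norm y ^ j) \<le> norm (c i j) * (R^i * R^j)"
      using R by (intro mult_left_mono mult_mono) auto
    then show "norm ((\<lambda>(i,j). c i j * x ^ i * y ^ j) p) \<le> g p"
      by (simp add: p g_def norm_mult norm_power mult_ac)
  qed
  define \<rho> where "\<rho> = R/2"
  have \<rho>: "0 < \<rho>" using R by (auto simp: \<rho>_def)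
  have "\<forall>x y. norm x < \<rho> \<and> norm y < \<rho> \<longrightarrow>
           ((\<lambda>t. f t y) has_field_derivative deriv (\<lambda>t. f t y) x) (at x) \<and>
           norm (deriv (\<lambda>t. f t y) x) \<le> (M+1)/\<rho>"
  proof (intro allI impI)
    fix x y :: complex assume xy: "norm x < \<rho> \<and> norm y < \<rho>"
    have hol: "(\<lambda>t. f t y) holomorphic_on ball 0 \<epsilon>"
      by (rule slice_holo[OF e H]) (use xy R \<rho>_def in auto)
    have xb: "x \<in> ball 0 \<epsilon>" using xy R \<rho>_def by auto
    have D: "((\<lambda>t. f t y) has_field_derivative deriv (\<lambda>t. f t y) x) (at x)"
      using holomorphic_derivI[OF hol open_ball xb] .
    have sub1: "cball x \<rho> \<subseteq> ball 0 \<epsilon>"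
    proof
      fix w assume "w \<in> cball x \<rho>"
      then have "norm w \<le> norm x + \<rho>" using norm_triangle_ineq2[of w x]
        by (auto simp: dist_norm norm_minus_commute)
      then show "w \<in> ball 0 \<epsilon>" using xy R \<rho>_def by auto
    qed
    have "norm ((deriv ^^ 1) (\<lambda>t. f t y) x) \<le> fact 1 * (M+1) / \<rho>^1"
    proof (rule Cauchy_higher_deriv_bound[where y=0])
      show "(\<lambda>t. f t y) holomorphic_on ball x \<rho>"
        using hol sub1 ball_subset_cball holomorphic_on_subset by blast
      show "continuous_on (cball x \<rho>) (\<lambda>t. f t y)"
        using hol sub1 holomorphic_on_imp_continuous_on continuous_on_subset by blast
      fix w assume "w \<in> ball x \<rho>"
      then have "norm w < norm x + \<rho>" using norm_triangle_ineq2[of w x]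
        by (auto simp: dist_norm norm_minus_commute)
      then have "norm w < R" using xy \<rho>_def by auto
      then have "norm (f w y) \<le> M" using fb xy \<rho>_def R by auto
      then show "f w y \<in> ball 0 (M+1)" by auto
    qed (use \<rho> in auto)
    then show "((\<lambda>t. f t y) has_field_derivative deriv (\<lambda>t. f t y) x) (at x) \<and>
           norm (deriv (\<lambda>t. f t y) x) \<le> (M+1)/\<rho>" using D by simp
  qed
  then show ?thesis using \<rho> by blast
qed

lemma germ_facts:
  assumes "analytic_germ2 h"
  shows "\<exists>\<rho>>0. \<exists>K. \<forall>x y. norm x < \<rho> \<and> norm y < \<rho> \<longrightarrow>
     ((\<lambda>t. h t y) has_field_derivative deriv (\<lambda>t. h t y) x) (at x) \<and>
     norm (deriv (\<lambda>t. h t y) x) \<le> K \<and>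
     ((\<lambda>t. h x t) has_field_derivative deriv (\<lambda>t. h x t) y) (at y) \<and>
     norm (deriv (\<lambda>t. h x t) y) \<le> K"
proof -
  obtain c :: "nat \<Rightarrow> nat \<Rightarrow> complex" and \<epsilon> where e: "\<epsilon> > 0" and
    H: "\<forall>x y. norm x < \<epsilon> \<and> norm y < \<epsilon> \<longrightarrow>
        ((\<lambda>(i,j). c i j * x ^ i * y ^ j) has_sum h x y) UNIV"
    using assms unfolding analytic_germ2_def by blast
  have H': "\<forall>x y. norm x < \<epsilon> \<and> norm y < \<epsilon> \<longrightarrow>
        ((\<lambda>(i,j). c j i * x ^ i * y ^ j) has_sum (\<lambda>x y. h y x) x y) UNIV"
  proof (intro allI impI)
    fix x y :: complex assume "norm x < \<epsilon> \<and> norm y < \<epsilon>"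
    then have "((\<lambda>(i,j). c i j * y ^ i * x ^ j) has_sum h y x) (UNIV \<times> UNIV)"
      using H by auto
    then have "((\<lambda>(a,b). (\<lambda>(i,j). c i j * y ^ i * x ^ j) (b,a)) has_sum h y x) (UNIV \<times> UNIV)"
      using has_sum_swap by blast
    then have "((\<lambda>(i,j). c j i * x ^ i * y ^ j) has_sum h y x) (UNIV \<times> UNIV)"
      by (rule has_sum_cong[THEN iffD1, rotated]) (auto simp: mult_ac)
    then show "((\<lambda>(i,j). c j i * x ^ i * y ^ j) has_sum (\<lambda>x y. h y x) x y) UNIV"
      by simp
  qed
  obtain \<rho>1 K1 where r1: "\<rho>1 > 0" and A: "\<forall>x y. norm x < \<rho>1 \<and> norm y < \<rho>1 \<longrightarrow>
           ((\<lambda>t. h t y) has_field_derivative deriv (\<lambda>t. h t y) x) (at x) \<and>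
           norm (deriv (\<lambda>t. h t y) x) \<le> K1"
    using slice_bound[OF e H] by blast
  obtain \<rho>2 K2 where r2: "\<rho>2 > 0" and B: "\<forall>x y. norm x < \<rho>2 \<and> norm y < \<rho>2 \<longrightarrow>
           ((\<lambda>t. h y t) has_field_derivative deriv (\<lambda>t. h y t) x) (at x) \<and>
           norm (deriv (\<lambda>t. h y t) x) \<le> K2"
    using slice_bound[OF e H'] by blast
  show ?thesis
    apply (rule exI[of _ "min \<rho>1 \<rho>2"])
    apply (rule conjI)
    using r1 r2 apply simp
    apply (rule exI[of _ "max K1 K2"])
    using A B by fastforce
qed

theorem mainTheorem4:
  fixes p h :: "complex \<Rightarrow> complex \<Rightarrow> complex"
  fixes r s :: "complex \<Rightarrow> complex"
  assumes h_an: "analytic_germ2 h"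
      and h0: "h 0 0 = 0"
      and p_def: "\<forall>x y. p x y = 1 + x * y * (1 + h x y)"
      and curv: "blaschke_curvature_web3 p 0 0 \<noteq> 0"
      and r_an: "r analytic_on {0}"
      and s_an: "s analytic_on {0}"
      and eqn: "\<forall>\<^sub>F z in nhds (0::complex, 0::complex).
                  deriv r (fst z) * p (fst z) (snd z) - r (fst z) * partial_x p (fst z) (snd z)
                  - (deriv s (snd z) * (p (fst z) (snd z)) ^ 3
                     + s (snd z) * (p (fst z) (snd z)) ^ 2 * partial_y p (fst z) (snd z)) = 0"
      and r0: "r 0 = 0"
      and s0: "s 0 = 0"
  shows "(\<forall>\<^sub>F x in nhds 0. r x = 0) \<and> (\<forall>\<^sub>F y in nhds 0. s y = 0)"
  proof -
  obtain \<rho> K where \<rho>: "\<rho> > 0" and HK: "\<forall>x y. norm x < \<rho> \<and> norm y < \<rho> \<longrightarrow>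
     ((\<lambda>t. h t y) has_field_derivative deriv (\<lambda>t. h t y) x) (at x) \<and>
     norm (deriv (\<lambda>t. h t y) x) \<le> K \<and>
     ((\<lambda>t. h x t) has_field_derivative deriv (\<lambda>t. h x t) y) (at y) \<and>
     norm (deriv (\<lambda>t. h x t) y) \<le> K"
    using germ_facts[OF h_an] by blast
  define E where "E z = (deriv r (fst z) * p (fst z) (snd z) - r (fst z) * partial_x p (fst z) (snd z)
                  - (deriv s (snd z) * (p (fst z) (snd z)) ^ 3
                     + s (snd z) * (p (fst z) (snd z)) ^ 2 * partial_y p (fst z) (snd z)) = 0)" for z
  obtain e where e: "e > 0" and Ee: "\<And>z. dist z (0,0) < e \<Longrightarrow> E z"
    using eqn unfolding eventually_nhds_metric E_def by blast
  have E2: "E (x,y)" if "norm x < e/2" "norm y < e/2" for x y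
  proof (rule Ee)
    have "dist (x,y) (0,0) = sqrt ((norm x)^2 + (norm y)^2)"
      by (simp add: dist_Pair_Pair)
    also have "\<dots> \<le> norm x + norm y"
      by (rule sqrt_sum_squares_le_sum) auto
    finally show "dist (x,y) (0,0) < e" using that by simp
  qed
  have p10: "p t 0 = 1" "p 0 t = 1" for t using p_def by auto
  have px0: "partial_x p x 0 = 0" for x
  proof -
    have "(\<lambda>t. p t 0) = (\<lambda>t. 1)" using p10 by auto
    then show ?thesis unfolding partial_x_def by simp
  qed
  have py0: "partial_y p 0 y = 0" for y
  proof -
    have "(\<lambda>t. p 0 t) = (\<lambda>t. 1)" using p10 by auto
    then show ?thesis unfolding partial_y_def by simp
  qed
  define a where "a = deriv r 0"
  have dr: "deriv r x = deriv s 0" if "norm x < e/2" for x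
    using E2[OF that, of 0] e by (simp add: E_def p10 px0 s0)
  have ds: "deriv s y = a" if "norm y < e/2" for y
    using E2[of 0 y] that e by (simp add: E_def p10 py0 r0 a_def)
  have dr': "deriv r x = a" if "norm x < e/2" for x
    using dr[OF that] ds[of 0] e by simp
  obtain d1 where d1: "d1 > 0" "r holomorphic_on ball 0 d1"
    using r_an unfolding analytic_on_def by blast
  obtain d2 where d2: "d2 > 0" "s holomorphic_on ball 0 d2"
    using s_an unfolding analytic_on_def by blast
  define d where "d = min (e/2) (min d1 d2)"
  have d: "d > 0" using d1 d2 e by (simp add: d_def)
  have rlin: "r x = a * x" if "norm x < d" for x
  proof -
    have "\<exists>c. \<forall>x\<in>ball 0 d. r x - a * x = c"
    proof (rule has_field_derivative_zero_constant)
      fix x :: complex assume x: "x \<in> ball 0 d"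
      have "(r has_field_derivative deriv r x) (at x within ball 0 d)"
        by (rule holomorphic_derivI[OF d1(2) open_ball]) (use x in \<open>auto simp: d_def\<close>)
      moreover have "deriv r x = a" using dr' x by (auto simp: d_def)
      ultimately show "((\<lambda>x. r x - a * x) has_field_derivative 0) (at x within ball 0 d)"
        by (auto intro!: derivative_eq_intros)
    qed auto
    then obtain c where c: "\<forall>x\<in>ball 0 d. r x - a * x = c" by blast
    have "0 \<in> ball 0 d" "x \<in> ball 0 d" using d that by auto
    then have "r 0 - a * 0 = c" "r x - a * x = c" using c by blast+
    then show ?thesis using r0 by simp
  qed
  have slin: "s x = a * x" if "norm x < d" for x
  proof -
    have "\<exists>c. \<forall>x\<in>ball 0 d. s x - a * x = c"
    proof (rule has_field_derivative_zero_constant)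
      fix x :: complex assume x: "x \<in> ball 0 d"
      have "(s has_field_derivative deriv s x) (at x within ball 0 d)"
        by (rule holomorphic_derivI[OF d2(2) open_ball]) (use x in \<open>auto simp: d_def\<close>)
      moreover have "deriv s x = a" using ds x by (auto simp: d_def)
      ultimately show "((\<lambda>x. s x - a * x) has_field_derivative 0) (at x within ball 0 d)"
        by (auto intro!: derivative_eq_intros)
    qed auto
    then obtain c where c: "\<forall>x\<in>ball 0 d. s x - a * x = c" by blast
    have "0 \<in> ball 0 d" "x \<in> ball 0 d" using d that by auto
    then have "s 0 - a * 0 = c" "s x - a * x = c" using c by blast+
    then show ?thesis using s0 by simp
  qed
  have a0: "a = 0"
  proof (rule ccontr)
    assume an: "a \<noteq> 0"
    define \<delta> where "\<delta> = min d \<rho>"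
    have \<delta>: "\<delta> > 0" using d \<rho> by (simp add: \<delta>_def)
    define Q where "Q t = (let u = 1 + h t t; P = 1 + t*t*u in
         - (u * (3 + 3*(t*t)*u + (t*t)*(t*t)*u*u)) - t * deriv (\<lambda>s. h s t) t - P*P*u
         - t * (P*P) * deriv (\<lambda>s. h t s) t)" for t
    have Qz: "Q t = 0" if t: "norm t < \<delta>" "t \<noteq> 0" for t
    proof -
      define u where "u = 1 + h t t"
      define Hx where "Hx = deriv (\<lambda>s. h s t) t"
      define Hy where "Hy = deriv (\<lambda>s. h t s) t"
      have hx: "((\<lambda>s. h s t) has_field_derivative Hx) (at t)"
        and hy: "((\<lambda>s. h t s) has_field_derivative Hy) (at t)"
        using HK t unfolding Hx_def Hy_def \<delta>_def by auto
      have "((\<lambda>s. p s t) has_field_derivative (t*(1+h t t) + t*t*Hx)) (at t)"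
      proof -
        have "((\<lambda>w. 1 + w * t * (1 + h w t)) has_field_derivative (t*(1+h t t) + t*t*Hx)) (at t)"
          by (rule derivative_eq_intros hx | simp add: algebra_simps)+
        moreover have "(\<lambda>s. p s t) = (\<lambda>w. 1 + w * t * (1 + h w t))" using p_def by auto
        ultimately show ?thesis by simp
      qed
      then have PX: "partial_x p t t = t*u + t*t*Hx"
        unfolding partial_x_def u_def by (rule DERIV_imp_deriv)
      have "((\<lambda>s. p t s) has_field_derivative (t*(1+h t t) + t*t*Hy)) (at t)"
      proof -
        have "((\<lambda>w. 1 + t * w * (1 + h t w)) has_field_derivative (t*(1+h t t) + t*t*Hy)) (at t)"
          by (rule derivative_eq_intros hy | simp add: algebra_simps)+
        moreover have "(\<lambda>s. p t s) = (\<lambda>w. 1 + t * w * (1 + h t w))" using p_def by auto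
        ultimately show ?thesis by simp
      qed
      then have PY: "partial_y p t t = t*u + t*t*Hy"
        unfolding partial_y_def u_def by (rule DERIV_imp_deriv)
      have P: "p t t = 1 + t*t*u" using p_def u_def by simp
      have tn: "norm t < e/2" "norm t < d" using t d_def \<delta>_def by auto
      have "E (t,t)" using E2 tn by simp
      then have "a * (1+t*t*u) - a*t*(t*u+t*t*Hx) - (a*(1+t*t*u)^3 + a*t*(1+t*t*u)^2*(t*u+t*t*Hy)) = 0"
        unfolding E_def
        using dr'[OF tn(1)] ds[OF tn(1)] rlin[OF tn(2)] slin[OF tn(2)] PX PY P
        by simp
      moreover have "a * (1+t*t*u) - a*t*(t*u+t*t*Hx) - (a*(1+t*t*u)^3 + a*t*(1+t*t*u)^2*(t*u+t*t*Hy))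
          = a * (t*t) * (- (u * (3 + 3*(t*t)*u + (t*t)*(t*t)*u*u)) - t * Hx - (1+t*t*u)*(1+t*t*u)*u
         - t * ((1+t*t*u)*(1+t*t*u)) * Hy)"
        by (simp add: power3_eq_cube power2_eq_square algebra_simps)
      moreover have "Q t = - (u * (3 + 3*(t*t)*u + (t*t)*(t*t)*u*u)) - t * Hx - (1+t*t*u)*(1+t*t*u)*u
         - t * ((1+t*t*u)*(1+t*t*u)) * Hy"
        unfolding Q_def Let_def u_def Hx_def Hy_def by simp
      ultimately have "a * (t*t) * Q t = 0" by simp
      then show ?thesis using an t by simp
    qed
    have hlim: "((\<lambda>t. h t t) \<longlongrightarrow> 0) (at 0)"
    proof -
      have "((\<lambda>t. h t t - h 0 0) \<longlongrightarrow> 0) (at 0)"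
      proof (rule Lim_null_comparison)
        show "\<forall>\<^sub>F t in at 0. norm (h t t - h 0 0) \<le> 2 * K * norm t"
          unfolding eventually_at
        proof (intro exI[of _ \<rho>] conjI \<rho> ballI impI)
          fix t :: complex assume "t \<in> UNIV" "t \<noteq> 0 \<and> dist t 0 < \<rho>"
          then have t: "norm t < \<rho>" by simp
          have "norm (h t t - h 0 t) \<le> K * norm (t - 0)"
          proof (rule field_differentiable_bound[of "ball 0 \<rho>" "\<lambda>s. h s t" "\<lambda>z. deriv (\<lambda>s. h s t) z"])
            fix z :: complex assume "z \<in> ball 0 \<rho>"
            then show "((\<lambda>s. h s t) has_field_derivative deriv (\<lambda>s. h s t) z) (at z within ball 0 \<rho>)"
              "norm (deriv (\<lambda>s. h s t) z) \<le> K"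
              using HK t by (auto intro: has_field_derivative_at_within)
          qed (use t \<rho> in auto)
          moreover have "norm (h 0 t - h 0 0) \<le> K * norm (t - 0)"
          proof (rule field_differentiable_bound[of "ball 0 \<rho>" "\<lambda>s. h 0 s" "\<lambda>z. deriv (\<lambda>s. h 0 s) z"])
            fix z :: complex assume "z \<in> ball 0 \<rho>"
            then show "((\<lambda>s. h 0 s) has_field_derivative deriv (\<lambda>s. h 0 s) z) (at z within ball 0 \<rho>)"
              "norm (deriv (\<lambda>s. h 0 s) z) \<le> K"
              using HK t \<rho> by (auto intro: has_field_derivative_at_within)
          qed (use t \<rho> in auto)
          ultimately show "norm (h t t - h 0 0) \<le> 2 * K * norm t"
            using norm_triangle_ineq[of "h t t - h 0 t" "h 0 t - h 0 0"] by simp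
        qed
        show "((\<lambda>t. 2 * K * norm t) \<longlongrightarrow> 0) (at 0)"
          by (auto intro!: tendsto_eq_intros)
      qed
      then show ?thesis using h0 by simp
    qed
    have Hxlim: "((\<lambda>t. t * deriv (\<lambda>s. h s t) t) \<longlongrightarrow> 0) (at 0)"
    proof (rule Lim_null_comparison)
      show "\<forall>\<^sub>F t in at 0. norm (t * deriv (\<lambda>s. h s t) t) \<le> K * norm t"
        unfolding eventually_at
      proof (intro exI[of _ \<rho>] conjI \<rho> ballI impI)
        fix t :: complex assume "t \<in> UNIV" "t \<noteq> 0 \<and> dist t 0 < \<rho>"
        then have t: "norm t < \<rho>" by simp
        then have "norm (deriv (\<lambda>s. h s t) t) \<le> K" using HK by auto
        then show "norm (t * deriv (\<lambda>s. h s t) t) \<le> K * norm t"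
          by (simp add: norm_mult mult.commute[of "cmod t"] mult_right_mono)
      qed
      show "((\<lambda>t. K * norm t) \<longlongrightarrow> 0) (at 0)"
        by (auto intro!: tendsto_eq_intros)
    qed
    have Hylim: "((\<lambda>t. t * deriv (\<lambda>s. h t s) t) \<longlongrightarrow> 0) (at 0)"
    proof (rule Lim_null_comparison)
      show "\<forall>\<^sub>F t in at 0. norm (t * deriv (\<lambda>s. h t s) t) \<le> K * norm t"
        unfolding eventually_at
      proof (intro exI[of _ \<rho>] conjI \<rho> ballI impI)
        fix t :: complex assume "t \<in> UNIV" "t \<noteq> 0 \<and> dist t 0 < \<rho>"
        then have t: "norm t < \<rho>" by simp
        then have "norm (deriv (\<lambda>s. h t s) t) \<le> K" using HK by auto
        then show "norm (t * deriv (\<lambda>s. h t s) t) \<le> K * norm t"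
          by (simp add: norm_mult mult.commute[of "cmod t"] mult_right_mono)
      qed
      show "((\<lambda>t. K * norm t) \<longlongrightarrow> 0) (at 0)"
        by (auto intro!: tendsto_eq_intros)
    qed
    have tlim: "((\<lambda>t::complex. t) \<longlongrightarrow> 0) (at 0)" by (rule tendsto_ident_at)
    have Qeq: "Q = (\<lambda>t. - ((1+h t t)*(3 + 3*(t*t)*(1+h t t) + (t*t)*(t*t)*(1+h t t)*(1+h t t)))
        - t * deriv (\<lambda>s. h s t) t - (1+t*t*(1+h t t))*(1+t*t*(1+h t t))*(1+h t t)
        - (1+t*t*(1+h t t))*(1+t*t*(1+h t t))*(t * deriv (\<lambda>s. h t s) t))"
      by (auto simp: Q_def Let_def fun_eq_iff mult_ac)
    have "(Q \<longlongrightarrow> - ((1+0)*(3 + 3*(0*0)*(1+0) + (0*0)*(0*0)*(1+0)*(1+0)))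
        - 0 - (1+0*0*(1+0))*(1+0*0*(1+0))*(1+0)
        - (1+0*0*(1+0))*(1+0*0*(1+0))*0) (at 0)"
      unfolding Qeq
      by (intro tendsto_intros hlim Hxlim Hylim tlim)
    then have Ql: "(Q \<longlongrightarrow> -4) (at 0)" by simp
    have ev1: "\<forall>\<^sub>F t in at 0. Q t \<noteq> 0"
      using tendsto_imp_eventually_ne[OF Ql, of 0] by simp
    have ev2: "\<forall>\<^sub>F t in at (0::complex). Q t = 0"
      unfolding eventually_at
      by (rule exI[of _ \<delta>]) (use \<delta> Qz in \<open>auto simp: dist_norm\<close>)
    have "\<forall>\<^sub>F t in at (0::complex). False"
      using eventually_conj[OF ev1 ev2] by (rule eventually_mono) auto
    then show False by (simp add: eventually_False)
  qed
  show ?thesis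
  proof
    show "\<forall>\<^sub>F x in nhds 0. r x = 0"
      unfolding eventually_nhds_metric using d rlin a0 by (auto simp: dist_norm)
    show "\<forall>\<^sub>F y in nhds 0. s y = 0"
      unfolding eventually_nhds_metric using d slin a0 by (auto simp: dist_norm)
  qed
qed

end
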